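(* Let $p_1,\ldots,p_m\in[0,1]$, $\alpha\in[0,1]$, $h=h_\alpha$ as in the context, and let $S\subseteq\{1,\ldots,m\}$ be nonempty. Define \[ z_\alpha=\begin{cases}0,&\text{if } h=m,\\ \min\{m-h\le i\le m: h\,p_{(i)}\le (i-m+h+1)\alpha\},&\text{otherwise.}\end{cases} \] Then the maximum of $1-u+|\{i\in S: hp_i\le u\alpha\}|$ over $1\le u\le |S|$ is attained for some $1\le u\le z_\alpha-m+h+1$.
   Context: Setting: $m$ hypotheses with $p$-values $p_1,\ldots,p_m\in[0,1]$; $p_{(1)}\le\cdots\le p_{(m)}$ are the ordered $p$-values (with the convention $p_{(0)}$ not used). For $I\subseteq\{1,\ldots,m\}$, $p_{(i:I)}$ denotes the $i$-th smallest of $\{p_j:j\in I\}$. The Simes local test rejects $I$ ($I\in\mathcal{U}_\alpha$) iff there is $1\le i\le |I|$ with $|I|\,p_{(i:I)}\le i\alpha$. Let $r_1,\ldots,r_m$ be a permutation with $p_{r_i}=p_{(i)}$, $K_i=\{r_{m-i+1},\ldots,r_m\}$, and $h_\alpha=\max\{0\le i\le m: K_i\notin\mathcal{U}_\alpha\}$. *)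

theory Defs
  imports Complex_Main
begin

definition pord :: "(nat \<Rightarrow> real) \<Rightarrow> nat set \<Rightarrow> nat \<Rightarrow> real" where
  "pord p I i = sort (map p (sorted_list_of_set I)) ! (i - 1)"

definition simes_rej :: "real \<Rightarrow> (nat \<Rightarrow> real) \<Rightarrow> nat set \<Rightarrow> bool" where
  "simes_rej \<alpha> p I = (\<exists>i\<in>{1..card I}. real (card I) * pord p I i \<le> real i * \<alpha>)"

definition Kset :: "(nat \<Rightarrow> nat) \<Rightarrow> nat \<Rightarrow> nat \<Rightarrow> nat set" where
  "Kset r m i = r ` {m - i + 1..m}"

definition h_alpha :: "real \<Rightarrow> (nat \<Rightarrow> real) \<Rightarrow> (nat \<Rightarrow> nat) \<Rightarrow> nat \<Rightarrow> nat" where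
  "h_alpha \<alpha> p r m = Max {i\<in>{0..m}. \<not> simes_rej \<alpha> p (Kset r m i)}"

definition z_alpha :: "real \<Rightarrow> (nat \<Rightarrow> real) \<Rightarrow> nat \<Rightarrow> nat \<Rightarrow> nat" where
  "z_alpha \<alpha> p m h = (if h = m then 0 else
     Min {i. m - h \<le> i \<and> i \<le> m \<and>
             real h * pord p {1..m} i \<le> real (i + h + 1 - m) * \<alpha>})"

end

theory Submission
  imports Defs "HOL-Library.Multiset"
begin

lemma pord_full: "pord p {1..(m::nat)} i = sort (map p [1..<Suc m]) ! (i-1)"
  unfolding pord_def by (simp add: atLeastLessThanSuc_atLeastAtMost[symmetric])

lemma q_mono:
  assumes "1 \<le> i" "i \<le> j" "j \<le> m"
  shows "pord p {1..m} i \<le> pord p {1..m} j"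
proof -
  have "sort (map p [1..<Suc m]) ! (i-1) \<le> sort (map p [1..<Suc m]) ! (j-1)"
    by (rule sorted_nth_mono[OF sorted_sort]) (use assms in auto)
  thus ?thesis by (simp only: pord_full)
qed

lemma pord_K:
  fixes p :: "nat \<Rightarrow> real"
  assumes r_perm: "bij_betw r {1..m} {1..m}"
    and r_sort: "\<forall>i\<in>{1..m}. p (r i) = pord p {1..m} i"
    and k: "k \<le> m"
  shows "card (Kset r m k) = k"
    and "1 \<le> j \<Longrightarrow> j \<le> k \<Longrightarrow> pord p (Kset r m k) j = pord p {1..m} (m-k+j)"
proof -
  let ?A = "{m-k+1..m}"
  let ?q = "pord p {1..m}"
  have sub: "?A \<subseteq> {1..m}" by auto
  have inj: "inj_on r ?A" using r_perm sub bij_betw_imp_inj_on inj_on_subset by blast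
  show "card (Kset r m k) = k" unfolding Kset_def using inj k by (simp add: card_image)
  assume j: "1 \<le> j" "j \<le> k"
  have ms: "mset (map p (sorted_list_of_set (Kset r m k))) = mset (map ?q [m-k+1..<Suc m])"
  proof -
    have "mset (map p (sorted_list_of_set (Kset r m k))) = image_mset p (mset_set (r ` ?A))"
      by (simp add: Kset_def del: mset_sorted_list_of_multiset flip: sorted_list_of_mset_set) (metis mset_sorted_list_of_multiset)
    also have "\<dots> = image_mset p (image_mset r (mset_set ?A))"
      using image_mset_mset_set[OF inj] by simp
    also have "\<dots> = image_mset ?q (mset_set ?A)"
      unfolding multiset.map_comp
      by (rule image_mset_cong) (use r_sort sub in auto)
    also have "\<dots> = mset (map ?q [m-k+1..<Suc m])"
      by (simp only: mset_map mset_upt atLeastLessThanSuc_atLeastAtMost)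
    finally show ?thesis .
  qed
  have so: "sorted (map ?q [m-k+1..<Suc m])"
    unfolding sorted_iff_nth_mono
  proof (intro allI impI)
    fix i j assume "i \<le> j" "j < length (map ?q [m-k+1..<Suc m])"
    thus "map ?q [m-k+1..<Suc m] ! i \<le> map ?q [m-k+1..<Suc m] ! j"
      using q_mono[of "Suc (m-k+i)" "Suc (m-k+j)" m p] by (simp del: upt_Suc add: nth_map_upt)
  qed
  have "sort (map p (sorted_list_of_set (Kset r m k))) = map ?q [m-k+1..<Suc m]"
    by (rule properties_for_sort[OF ms[symmetric] so])
  hence "pord p (Kset r m k) j = map ?q [m-k+1..<Suc m] ! (j-1)"
    by (simp add: pord_def)
  also have "\<dots> = ?q (m-k+1+(j-1))" using j k by (simp del: upt_Suc add: nth_map_upt)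
  also have "m-k+1+(j-1) = m-k+j" using j by simp
  finally show "pord p (Kset r m k) j = ?q (m-k+j)" .
qed
lemma card_perm:
  fixes p :: "nat \<Rightarrow> real"
  assumes r_perm: "bij_betw r {1..m} {1..m}"
    and r_sort: "\<forall>i\<in>{1..m}. p (r i) = pord p {1..m} i"
  shows "card {i\<in>{1..m}. P (p i)} = card {i\<in>{1..m}. P (pord p {1..m} i)}"
proof -
  have eq: "{i\<in>{1..m}. P (p i)} = r ` {i\<in>{1..m}. P (pord p {1..m} i)}"
  proof
    show "r ` {i\<in>{1..m}. P (pord p {1..m} i)} \<subseteq> {i\<in>{1..m}. P (p i)}"
    proof
      fix x assume "x \<in> r ` {i\<in>{1..m}. P (pord p {1..m} i)}"
      then obtain i where i: "i \<in> {1..m}" "P (pord p {1..m} i)" "x = r i" by blast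
      have "r i \<in> {1..m}" using bij_betw_apply[OF r_perm i(1)] .
      moreover have "p (r i) = pord p {1..m} i" using r_sort i(1) by blast
      ultimately show "x \<in> {i\<in>{1..m}. P (p i)}" using i(2,3) by simp
    qed
    show "{i\<in>{1..m}. P (p i)} \<subseteq> r ` {i\<in>{1..m}. P (pord p {1..m} i)}"
    proof
      fix x assume x: "x \<in> {i\<in>{1..m}. P (p i)}"
      hence "x \<in> r ` {1..m}" using bij_betw_imp_surj_on[OF r_perm] by simp
      then obtain i where i: "i \<in> {1..m}" "x = r i" by blast
      have "p (r i) = pord p {1..m} i" using r_sort i(1) by blast
      hence "P (pord p {1..m} i)" using x i(2) by simp
      thus "x \<in> r ` {i\<in>{1..m}. P (pord p {1..m} i)}" using i by blast
    qed
  qed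
  have "inj_on r {i\<in>{1..m}. P (pord p {1..m} i)}"
    using bij_betw_imp_inj_on[OF r_perm] by (rule inj_on_subset) auto
  hence "card (r ` {i\<in>{1..m}. P (pord p {1..m} i)}) = card {i\<in>{1..m}. P (pord p {1..m} i)}"
    by (rule card_image)
  thus ?thesis by (simp only: eq)
qed

theorem lemma3:
  fixes p :: "nat \<Rightarrow> real" and \<alpha> :: real and m :: nat
    and r :: "nat \<Rightarrow> nat" and S :: "nat set"
  assumes p_range: "\<forall>i\<in>{1..m}. 0 \<le> p i \<and> p i \<le> 1"
    and alpha: "0 \<le> \<alpha>" "\<alpha> \<le> 1"
    and r_perm: "bij_betw r {1..m} {1..m}"
    and r_sort: "\<forall>i\<in>{1..m}. p (r i) = pord p {1..m} i"
    and S: "S \<subseteq> {1..m}" "S \<noteq> {}"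
  shows "let h = h_alpha \<alpha> p r m; z = z_alpha \<alpha> p m h;
             f = (\<lambda>u::nat. 1 - int u + int (card {i\<in>S. real h * p i \<le> real u * \<alpha>}))
         in \<exists>u\<in>{1..card S}. int u \<le> int z - int m + int h + 1 \<and>
               (\<forall>v\<in>{1..card S}. f v \<le> f u)"
proof -
  define h where "h = h_alpha \<alpha> p r m"
  define z where "z = z_alpha \<alpha> p m h"
  define f where "f = (\<lambda>u::nat. 1 - int u + int (card {i\<in>S. real h * p i \<le> real u * \<alpha>}))"
  define q where "q = pord p {1..m}"
  define H where "H = {i\<in>{0..m}. \<not> simes_rej \<alpha> p (Kset r m i)}"
  define C where "C = (\<lambda>v::nat. card {i\<in>{1..m}. real h * p i \<le> real v * \<alpha>})"
  have qnn: "0 \<le> q i" if "i \<in> {1..m}" for i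
  proof -
    have "r i \<in> {1..m}" using bij_betw_apply[OF r_perm that] .
    hence "0 \<le> p (r i)" using p_range by blast
    thus ?thesis using r_sort that unfolding q_def by simp
  qed
  have qmono: "q i \<le> q j" if "1 \<le> i" "i \<le> j" "j \<le> m" for i j
    unfolding q_def using q_mono that by blast
  have C_eq: "C v = card {i\<in>{1..m}. real h * q i \<le> real v * \<alpha>}" for v
    unfolding C_def q_def by (rule card_perm[OF r_perm r_sort])
  have finH: "finite H" unfolding H_def by auto
  have "0 \<in> H" unfolding H_def simes_rej_def Kset_def by simp
  hence hH: "h \<in> H" and hmax: "\<And>i. i \<in> H \<Longrightarrow> i \<le> h"
    using finH unfolding h_def h_alpha_def H_def[symmetric] by (auto intro: Max_in)
  have hm: "h \<le> m" using hH unfolding H_def by auto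
  have hnr: "real v * \<alpha> < real h * q (m-h+v)" if "1 \<le> v" "v \<le> h" for v
  proof -
    have "\<not> simes_rej \<alpha> p (Kset r m h)" using hH unfolding H_def by auto
    hence "\<not> real h * pord p (Kset r m h) v \<le> real v * \<alpha>"
      unfolding simes_rej_def pord_K(1)[OF r_perm r_sort hm] using that by auto
    thus ?thesis unfolding pord_K(2)[OF r_perm r_sort hm that] q_def by simp
  qed
  have F3: "C v \<le> m - h + v - 1" if v: "1 \<le> v" for v
  proof (cases "h < v")
    case True
    have "C v \<le> card {1..m}" unfolding C_def by (rule card_mono) auto
    thus ?thesis using True by simp
  next
    case False
    let ?t = "m-h+v"
    have lt: "real v * \<alpha> < real h * q ?t" using hnr v False by simp
    have "{i\<in>{1..m}. real h * q i \<le> real v * \<alpha>} \<subseteq> {1..?t-1}"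
    proof
      fix i assume i: "i \<in> {i\<in>{1..m}. real h * q i \<le> real v * \<alpha>}"
      have "\<not> ?t \<le> i"
      proof
        assume "?t \<le> i"
        hence "q ?t \<le> q i" using qmono i v by auto
        hence "real h * q ?t \<le> real h * q i" by (simp add: mult_left_mono)
        thus False using i lt by auto
      qed
      thus "i \<in> {1..?t-1}" using i by auto
    qed
    hence "card {i\<in>{1..m}. real h * q i \<le> real v * \<alpha>} \<le> card {1..?t-1}"
      by (intro card_mono) auto
    hence "card {i\<in>{1..m}. real h * q i \<le> real v * \<alpha>} \<le> ?t - 1" by simp
    thus ?thesis unfolding C_eq .
  qed
  obtain D where D1: "1 \<le> D" and F2: "m - h + D - 1 \<le> C D"
    and Dz: "int D = int z - int m + int h + 1"
  proof (cases "h = m")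
    case True
    show ?thesis by (rule that[of 1]) (use True in \<open>auto simp: z_def z_alpha_def\<close>)
  next
    case False
    define Z where "Z = {i. m - h \<le> i \<and> i \<le> m \<and> real h * q i \<le> real (i + h + 1 - m) * \<alpha>}"
    have zZ: "z = Min Z" unfolding z_def z_alpha_def Z_def q_def using False by simp
    have "h + 1 \<notin> H" using hmax[of "h+1"] by auto
    hence rej: "simes_rej \<alpha> p (Kset r m (h+1))" using False hm unfolding H_def by auto
    have hm1: "h + 1 \<le> m" using False hm by simp
    obtain j where j: "1 \<le> j" "j \<le> h+1"
      and jr: "real (h+1) * pord p (Kset r m (h+1)) j \<le> real j * \<alpha>"
      using rej unfolding simes_rej_def pord_K(1)[OF r_perm r_sort hm1] by auto
    define i where "i = m - (h+1) + j"
    have jr2: "real (h+1) * q i \<le> real j * \<alpha>"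
      using jr unfolding pord_K(2)[OF r_perm r_sort hm1 j] i_def q_def .
    have ir: "i \<in> {1..m}" "m - h \<le> i" using j hm1 unfolding i_def by auto
    have "real h * q i \<le> real (h+1) * q i" using qnn[OF ir(1)] by (simp add: algebra_simps)
    moreover have "i + h + 1 - m = j" using j hm1 unfolding i_def by simp
    ultimately have "i \<in> Z" unfolding Z_def using jr2 ir by auto
    moreover have "finite Z" unfolding Z_def by auto
    ultimately have zin: "z \<in> Z" unfolding zZ using Min_in by blast
    hence zr: "m - h \<le> z" "z \<le> m" "real h * q z \<le> real (z + h + 1 - m) * \<alpha>"
      unfolding Z_def by auto
    show ?thesis
    proof (rule that[of "z + h + 1 - m"])
      show "1 \<le> z + h + 1 - m" using zr by simp
      show "int (z + h + 1 - m) = int z - int m + int h + 1" using zr hm by simp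
      have "{1..z} \<subseteq> {i\<in>{1..m}. real h * q i \<le> real (z + h + 1 - m) * \<alpha>}"
      proof
        fix i assume i: "i \<in> {1..z}"
        hence "q i \<le> q z" using qmono zr by auto
        hence "real h * q i \<le> real h * q z" by (simp add: mult_left_mono)
        thus "i \<in> {i\<in>{1..m}. real h * q i \<le> real (z + h + 1 - m) * \<alpha>}"
          using i zr by auto
      qed
      hence "card {1..z} \<le> C (z + h + 1 - m)" unfolding C_eq by (intro card_mono) auto
      hence "z \<le> C (z + h + 1 - m)" by simp
      thus "m - h + (z + h + 1 - m) - 1 \<le> C (z + h + 1 - m)" using zr hm by simp
    qed
  qed
  have key: "f v \<le> f D" if v: "D \<le> v" for v
  proof -
    define A where "A = (\<lambda>v::nat. {i\<in>{1..m}. real h * p i \<le> real v * \<alpha>})"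
    define B where "B = (\<lambda>v::nat. {i\<in>S. real h * p i \<le> real v * \<alpha>})"
    have le: "real D * \<alpha> \<le> real v * \<alpha>" using v alpha by (simp add: mult_right_mono)
    have AD: "A D \<subseteq> A v" unfolding A_def using le by auto
    have BD: "B D \<subseteq> B v" unfolding B_def using le by auto
    have finA: "finite (A v)" unfolding A_def by auto
    have finS: "finite S" using S(1) finite_subset by blast
    have finB: "finite (B v)" unfolding B_def using finS by simp
    have "B v - B D \<subseteq> A v - A D" unfolding A_def B_def using S by auto
    hence "card (B v - B D) \<le> card (A v - A D)" using finA by (intro card_mono) auto
    hence "int (card (B v)) - int (card (B D)) \<le> int (card (A v)) - int (card (A D))"
      using card_Diff_subset[OF finite_subset[OF BD finB] BD]
        card_Diff_subset[OF finite_subset[OF AD finA] AD]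
        card_mono[OF finA AD] card_mono[OF finB BD] by linarith
    moreover have "card (A v) = C v" "card (A D) = C D" unfolding A_def C_def by auto
    moreover have "C v \<le> m - h + v - 1" using F3 D1 v by simp
    ultimately have "int (card (B v)) - int (card (B D)) \<le> int v - int D"
      using F2 D1 v hm by linarith
    thus ?thesis unfolding f_def B_def by simp
  qed
  have finS: "finite S" using S finite_subset by blast
  hence cS: "1 \<le> card S" using S by (simp add: Suc_le_eq card_gt_0_iff)
  define M where "M = Max (f ` {1..card S})"
  have "M \<in> f ` {1..card S}" unfolding M_def using cS by (intro Max_in) auto
  then obtain u0 where u0: "u0 \<in> {1..card S}" "f u0 = M" by auto
  have Mge: "f v \<le> M" if "v \<in> {1..card S}" for v unfolding M_def using that by simp
  have main: "\<exists>u\<in>{1..card S}. int u \<le> int z - int m + int h + 1 \<and> (\<forall>v\<in>{1..card S}. f v \<le> f u)"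
  proof (cases "u0 \<le> D")
    case True
    have "int u0 \<le> int D" using True by simp
    hence "int u0 \<le> int z - int m + int h + 1" using Dz by linarith
    moreover have "\<forall>v\<in>{1..card S}. f v \<le> f u0"
    proof
      fix v assume "v \<in> {1..card S}"
      hence "f v \<le> M" by (rule Mge)
      thus "f v \<le> f u0" using u0(2) by linarith
    qed
    ultimately show ?thesis using u0(1) by (intro bexI[of _ u0] conjI)
  next
    case False
    hence DS: "D \<in> {1..card S}" using u0 D1 by auto
    have fu0: "f u0 \<le> f D" by (rule key) (use False in linarith)
    have fD: "\<forall>v\<in>{1..card S}. f v \<le> f D"
    proof
      fix v assume "v \<in> {1..card S}"
      hence "f v \<le> M" by (rule Mge)
      thus "f v \<le> f D" using fu0 u0(2) by linarith
    qed
    have "int D \<le> int z - int m + int h + 1" using Dz by linarith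
    thus ?thesis using fD DS by (intro bexI[of _ D] conjI)
  qed
  show ?thesis unfolding Let_def using main[unfolded f_def z_def h_def] .
qed
end
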